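(* Let $\lambda>0$ be a scalar and let $T\mathcal{S}^3=\{(q,p)\in\mathbb{R}^4\times\mathbb{R}^4:\ \|q\|=1,\ q^Tp=0\}$. Define the binary operation, for $g_1=(q_1,p_1)$, $g_2=(q_2,p_2)\in T\mathcal{S}^3$, $$g_1\cdot g_2=\Big(Q(q_1)q_2,\ Q(q_1)p_2+W(q_2)p_1+\lambda Q(q_1)\big(q_{0,2}q_2-\bar 1\big)+\lambda W(q_2)\big(q_{0,1}q_1-\bar 1\big)-\lambda\big(q_{0,12}\,Q(q_1)q_2-\bar 1\big)\Big),$$ where $q_{0,i}$ is the first (scalar) component of $q_i$, $q_{0,12}$ is the first component of $Q(q_1)q_2$, and $\bar 1=[1,0,0,0]^T$. Then $T\mathcal{S}^3$ is a Lie group under this operation, with identity $e=(\bar 1,0_{4\times1})$ and inverse $g^{-1}=(q^{-1},p^{-1})$ for $g=(q,p)$, where $q^{-1}=[q_0,-\vec q^{\,T}]^T$ and $p^{-1}=[p_0,-\vec p^{\,T}]^T$ (writing $q=[q_0,\vec q^{\,T}]^T$, $p=[p_0,\vec p^{\,T}]^T$).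
   Context: Notation: for $u\in\mathbb{R}^3$, $u^{\wedge}$ is the skew-symmetric matrix with $u^{\wedge}v=u\times v$. For $x=[x_0,\vec x^{\,T}]^T\in\mathbb{R}^4$: $Q(x)=\begin{bmatrix}x_0&-\vec x^{\,T}\\ \vec x& x_0I_3+\vec x^{\wedge}\end{bmatrix}$ and $W(x)=\begin{bmatrix}x_0&-\vec x^{\,T}\\ \vec x& x_0I_3-\vec x^{\wedge}\end{bmatrix}$. For $q_1,q_2\in\mathcal{S}^3$, $Q(q_1)q_2$ is the quaternion product $q_1\otimes q_2\in\mathcal{S}^3$. $T\mathcal{S}^3$ is the tangent bundle of the unit sphere $\mathcal{S}^3\subset\mathbb{R}^4$. *)

theory Defs
  imports "HOL-Analysis.Analysis" "HOL-Algebra.Group"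
begin

text \<open>Vectors x in R^4 are written x = [x0, x1, x2, x3]; in Isabelle x$1 = x0,
  x$2, x$3, x$4 are the components (x$1 is the scalar part).\<close>

definition hat :: "real^3 \<Rightarrow> real^3^3" where
  "hat u = vector [vector [0, -(u$3), u$2],
                   vector [u$3, 0, -(u$1)],
                   vector [-(u$2), u$1, 0]]"

definition vecpart :: "real^4 \<Rightarrow> real^3" where
  "vecpart x = vector [x$2, x$3, x$4]"

text \<open>Q(x) = [[x0, -vec x^T],[vec x, x0 I3 + hat(vec x)]] and
  W(x) = [[x0, -vec x^T],[vec x, x0 I3 - hat(vec x)]], assembled entrywise
  from the block description (indices 2..4 of the 4x4 matrix correspond to 1..3
  of the 3x3 block).\<close>

definition idx3 :: "4 \<Rightarrow> 3" where
  "idx3 i = (if i = 2 then 1 else if i = 3 then 2 else 3)"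

definition Qm :: "real^4 \<Rightarrow> real^4^4" where
  "Qm x = (\<chi> i j.
     if i = 1 \<and> j = 1 then x$1
     else if i = 1 then - (x$j)
     else if j = 1 then x$i
     else (if i = j then x$1 else 0) + hat (vecpart x) $ idx3 i $ idx3 j)"

definition Wm :: "real^4 \<Rightarrow> real^4^4" where
  "Wm x = (\<chi> i j.
     if i = 1 \<and> j = 1 then x$1
     else if i = 1 then - (x$j)
     else if j = 1 then x$i
     else (if i = j then x$1 else 0) - hat (vecpart x) $ idx3 i $ idx3 j)"

definition one4 :: "real^4" where
  "one4 = vector [1, 0, 0, 0]"

definition TS3 :: "((real^4) \<times> (real^4)) set" where
  "TS3 = {(q, p). norm q = 1 \<and> q \<bullet> p = 0}"

definition tmul :: "real \<Rightarrow> ((real^4) \<times> (real^4)) \<Rightarrow> ((real^4) \<times> (real^4)) \<Rightarrow> ((real^4) \<times> (real^4))" where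
  "tmul lam g1 g2 = (case g1 of (q1, p1) \<Rightarrow> case g2 of (q2, p2) \<Rightarrow>
     (Qm q1 *v q2,
      Qm q1 *v p2 + Wm q2 *v p1
      + lam *\<^sub>R (Qm q1 *v ((q2$1) *\<^sub>R q2 - one4))
      + lam *\<^sub>R (Wm q2 *v ((q1$1) *\<^sub>R q1 - one4))
      - lam *\<^sub>R (((Qm q1 *v q2)$1) *\<^sub>R (Qm q1 *v q2) - one4)))"

definition conj4 :: "real^4 \<Rightarrow> real^4" where
  "conj4 x = vector [x$1, -(x$2), -(x$3), -(x$4)]"

definition tinv :: "((real^4) \<times> (real^4)) \<Rightarrow> ((real^4) \<times> (real^4))" where
  "tinv g = (case g of (q, p) \<Rightarrow> (conj4 q, conj4 p))"

definition TS3_group :: "real \<Rightarrow> ((real^4) \<times> (real^4)) monoid" where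
  "TS3_group lam = \<lparr>carrier = TS3, mult = tmul lam, one = (one4, 0)\<rparr>"

text \<open>C-infinity smoothness of a real-valued function on a Euclidean space:
  differentiable everywhere, and every partial derivative is again smooth
  (greatest fixed point, i.e. derivatives of all orders exist).\<close>
coinductive smooth_real :: "('a::euclidean_space \<Rightarrow> real) \<Rightarrow> bool" where
  "(\<And>x. f differentiable (at x)) \<Longrightarrow>
   (\<And>b. b \<in> Basis \<Longrightarrow> smooth_real (\<lambda>x. frechet_derivative f (at x) b)) \<Longrightarrow>
   smooth_real f"

definition smooth_map :: "('a::euclidean_space \<Rightarrow> 'b::euclidean_space) \<Rightarrow> bool" where
  "smooth_map F \<longleftrightarrow> (\<forall>b\<in>Basis. smooth_real (\<lambda>x. F x \<bullet> b))"

end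

theory Submission
  imports Defs
begin

definition qm :: "real^4 \<Rightarrow> real^4 \<Rightarrow> real^4" where
 "qm x y = vector [x$1*y$1 - x$2*y$2 - x$3*y$3 - x$4*y$4,
                   x$1*y$2 + x$2*y$1 + x$3*y$4 - x$4*y$3,
                   x$1*y$3 + x$3*y$1 + x$4*y$2 - x$2*y$4,
                   x$1*y$4 + x$4*y$1 + x$2*y$3 - x$3*y$2]"
lemma vector_4 [simp]: "(vector [a,b,c,d] :: 'a::zero^4)$1 = a"  "(vector [a,b,c,d] :: 'a::zero^4)$2 = b"
  "(vector [a,b,c,d] :: 'a::zero^4)$3 = c" "(vector [a,b,c,d] :: 'a::zero^4)$4 = d"
  by (simp_all add: vector_def)
lemma Qm_qm: "Qm x *v y = qm x y"
  unfolding vec_eq_iff forall_4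
  by (simp add: Qm_def qm_def matrix_vector_mult_def sum_4 hat_def vecpart_def idx3_def algebra_simps)
lemma Wm_qm: "Wm x *v y = qm y x"
  unfolding vec_eq_iff forall_4
  by (simp add: Wm_def qm_def matrix_vector_mult_def sum_4 hat_def vecpart_def idx3_def algebra_simps)

definition pm :: "real \<Rightarrow> real^4 \<Rightarrow> real^4 \<Rightarrow> real^4 \<Rightarrow> real^4 \<Rightarrow> real^4" where
 "pm lam q1 p1 q2 p2 = qm q1 p2 + qm p1 q2
      + lam *\<^sub>R (qm q1 ((q2$1) *\<^sub>R q2 - one4))
      + lam *\<^sub>R (qm ((q1$1) *\<^sub>R q1 - one4) q2)
      - lam *\<^sub>R (((qm q1 q2)$1) *\<^sub>R (qm q1 q2) - one4)"

lemma tmul_eq: "tmul lam (q1,p1) (q2,p2) = (qm q1 q2, pm lam q1 p1 q2 p2)"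
  by (simp add: tmul_def pm_def Qm_qm Wm_qm)

lemma qm_assoc: "qm (qm x y) z = qm x (qm y z)"
  unfolding vec_eq_iff forall_4 by (simp add: qm_def algebra_simps)


definition ff :: "real \<Rightarrow> real^4 \<Rightarrow> real^4" where "ff lam q = lam *\<^sub>R ((q$1) *\<^sub>R q - one4)"
lemma qm_addL: "qm (x + y) z = qm x z + qm y z" unfolding vec_eq_iff forall_4 by (simp add: qm_def algebra_simps)
lemma qm_addR: "qm z (x + y) = qm z x + qm z y" unfolding vec_eq_iff forall_4 by (simp add: qm_def algebra_simps)
lemma qm_diffL: "qm (x - y) z = qm x z - qm y z" unfolding vec_eq_iff forall_4 by (simp add: qm_def algebra_simps)
lemma qm_diffR: "qm z (x - y) = qm z x - qm z y" unfolding vec_eq_iff forall_4 by (simp add: qm_def algebra_simps)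
lemma qm_scaleL: "qm (c *\<^sub>R x) z = c *\<^sub>R qm x z" unfolding vec_eq_iff forall_4 by (simp add: qm_def algebra_simps)
lemma qm_scaleR: "qm z (c *\<^sub>R x) = c *\<^sub>R qm z x" unfolding vec_eq_iff forall_4 by (simp add: qm_def algebra_simps)
lemma qm_oneL: "qm one4 z = z" unfolding vec_eq_iff forall_4 by (simp add: qm_def one4_def)
lemma qm_oneR: "qm z one4 = z" unfolding vec_eq_iff forall_4 by (simp add: qm_def one4_def)
lemmas qm_lin = qm_addL qm_addR qm_diffL qm_diffR qm_scaleL qm_scaleR qm_oneL qm_oneR

lemma pm_alt: "pm lam q1 p1 q2 p2 = qm q1 (p2 + ff lam q2) + qm (p1 + ff lam q1) q2 - ff lam (qm q1 q2)"
  unfolding pm_def ff_def by (simp add: qm_lin qm_assoc algebra_simps)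

lemma pm_assoc: "pm lam (qm q1 q2) (pm lam q1 p1 q2 p2) q3 p3 = pm lam q1 p1 (qm q2 q3) (pm lam q2 p2 q3 p3)"
  unfolding pm_alt by (simp add: qm_lin qm_assoc algebra_simps)

lemma qm_zeroL: "qm 0 z = 0" unfolding vec_eq_iff forall_4 by (simp add: qm_def)
lemma qm_zeroR: "qm z 0 = 0" unfolding vec_eq_iff forall_4 by (simp add: qm_def)
lemma ff_one: "ff lam one4 = 0" unfolding ff_def by (simp add: one4_def vector_def)
lemma qm_inner_L: "qm x y \<bullet> qm x z = (x \<bullet> x) * (y \<bullet> z)"
  by (simp add: qm_def inner_vec_def sum_4 algebra_simps)
lemma qm_inner_R: "qm y x \<bullet> qm z x = (x \<bullet> x) * (y \<bullet> z)"
  by (simp add: qm_def inner_vec_def sum_4 algebra_simps)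
lemma inner_ff: "q \<bullet> ff lam q = lam * (q$1 * (q \<bullet> q) - q$1)"
  by (simp add: ff_def one4_def inner_vec_def sum_4 algebra_simps)
lemma TS3_iff: "(q,p) \<in> TS3 \<longleftrightarrow> q \<bullet> q = 1 \<and> q \<bullet> p = 0"
  by (simp add: TS3_def norm_eq_1)
lemma closed: assumes "(q1,p1) \<in> TS3" "(q2,p2) \<in> TS3"
  shows "tmul lam (q1,p1) (q2,p2) \<in> TS3"
proof -
  have a: "q1 \<bullet> q1 = 1" "q1 \<bullet> p1 = 0" "q2 \<bullet> q2 = 1" "q2 \<bullet> p2 = 0" using assms by (auto simp: TS3_iff)
  have b: "qm q1 q2 \<bullet> qm q1 q2 = 1" using a by (simp add: qm_inner_L)
  have "qm q1 q2 \<bullet> pm lam q1 p1 q2 p2 = 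
     qm q1 q2 \<bullet> qm q1 (p2 + ff lam q2) + qm q1 q2 \<bullet> qm (p1 + ff lam q1) q2 - qm q1 q2 \<bullet> ff lam (qm q1 q2)"
    unfolding pm_alt by (simp add: inner_add_right inner_diff_right)
  also have "\<dots> = 0" unfolding qm_inner_L qm_inner_R b
    by (simp add: a b inner_ff inner_add_right)
  finally show ?thesis using b by (simp add: tmul_eq TS3_iff)
qed
lemma conj_in: "(q,p) \<in> TS3 \<Longrightarrow> (conj4 q, conj4 p) \<in> TS3"
  by (simp add: TS3_iff conj4_def inner_vec_def sum_4)
lemma qm_conj: "qm (conj4 q) q = (q \<bullet> q) *\<^sub>R one4"
  unfolding vec_eq_iff forall_4 by (simp add: qm_def conj4_def one4_def inner_vec_def sum_4 power2_eq_square)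
lemma qm_conj2: "qm (conj4 q) p + qm (conj4 p) q = (2 * (q \<bullet> p)) *\<^sub>R one4"
  unfolding vec_eq_iff forall_4 by (simp add: qm_def conj4_def one4_def inner_vec_def sum_4 algebra_simps)
lemma conj_add: "conj4 q + q = (2 * q$1) *\<^sub>R one4"
  unfolding vec_eq_iff forall_4 by (simp add: conj4_def one4_def)
lemma one4_1: "one4 $ 1 = 1" by (simp add: one4_def)
lemma conj_1: "conj4 q $ 1 = q $ 1" by (simp add: conj4_def)
lemma linv: assumes "(q,p) \<in> TS3" shows "tmul lam (conj4 q, conj4 p) (q,p) = (one4, 0)"
proof -
  have a: "q \<bullet> q = 1" "q \<bullet> p = 0" using assms by (auto simp: TS3_iff)
  have "pm lam (conj4 q) (conj4 p) q p = (qm (conj4 q) p + qm (conj4 p) q) + lam *\<^sub>R (q$1 *\<^sub>R qm (conj4 q) q - conj4 q)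
     + lam *\<^sub>R (q$1 *\<^sub>R qm (conj4 q) q - q)"
    unfolding pm_alt ff_def by (simp add: qm_lin conj_1 qm_conj a one4_1 algebra_simps)
  also have "\<dots> = lam *\<^sub>R ((2 * q$1) *\<^sub>R one4 - (conj4 q + q))"
    unfolding qm_conj2 qm_conj a vec_eq_iff by (simp add: algebra_simps)
  also have "\<dots> = 0" unfolding conj_add by simp
  finally show ?thesis by (simp add: tmul_eq qm_conj a)
qed
lemma lone: "tmul lam (one4, 0) (q,p) = (q,p)"
  by (simp add: tmul_eq pm_alt ff_one qm_lin qm_zeroL)
lemma one_in: "(one4, 0) \<in> TS3" by (simp add: TS3_iff one4_def inner_vec_def sum_4)

lemma grp: "group (TS3_group lam)"
proof (rule groupI)
  fix x y assume "x \<in> carrier (TS3_group lam)" "y \<in> carrier (TS3_group lam)"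
  then show "x \<otimes>\<^bsub>TS3_group lam\<^esub> y \<in> carrier (TS3_group lam)"
    by (cases x, cases y) (simp add: TS3_group_def closed)
next
  show "\<one>\<^bsub>TS3_group lam\<^esub> \<in> carrier (TS3_group lam)" by (simp add: TS3_group_def one_in)
next
  fix x y z show "x \<otimes>\<^bsub>TS3_group lam\<^esub> y \<otimes>\<^bsub>TS3_group lam\<^esub> z = x \<otimes>\<^bsub>TS3_group lam\<^esub> (y \<otimes>\<^bsub>TS3_group lam\<^esub> z)"
    by (cases x, cases y, cases z) (simp add: TS3_group_def tmul_eq qm_assoc pm_assoc)
next
  fix x show "\<one>\<^bsub>TS3_group lam\<^esub> \<otimes>\<^bsub>TS3_group lam\<^esub> x = x"
    by (cases x) (simp add: TS3_group_def lone)
next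
  fix x assume "x \<in> carrier (TS3_group lam)"
  moreover obtain q p where "x = (q,p)" by (cases x)
  ultimately show "\<exists>y\<in>carrier (TS3_group lam). y \<otimes>\<^bsub>TS3_group lam\<^esub> x = \<one>\<^bsub>TS3_group lam\<^esub>"
    by (intro bexI[of _ "(conj4 q, conj4 p)"]) (auto simp: TS3_group_def linv conj_in)
qed
lemma inv_eq: "g \<in> TS3 \<Longrightarrow> inv\<^bsub>TS3_group lam\<^esub> g = tinv g"
  apply (cases g)
  apply (rule group.inv_equality[OF grp])
  by (auto simp: TS3_group_def tinv_def linv conj_in)

inductive pf :: "('a::euclidean_space \<Rightarrow> real) \<Rightarrow> bool" where
  pf_const: "pf (\<lambda>x. c)"
| pf_lin: "pf (\<lambda>x. x \<bullet> c)"
| pf_add: "pf f \<Longrightarrow> pf g \<Longrightarrow> pf (\<lambda>x. f x + g x)"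
| pf_mul: "pf f \<Longrightarrow> pf g \<Longrightarrow> pf (\<lambda>x. f x * g x)"

lemma pf_deriv: "pf f \<Longrightarrow> \<exists>D. (\<forall>x. (f has_derivative D x) (at x)) \<and> (\<forall>b. pf (\<lambda>x. D x b))"
proof (induction rule: pf.induct)
  case (pf_const c)
  show ?case by (rule exI[of _ "\<lambda>x h. 0"]) (auto intro: pf.pf_const)
next
  case (pf_lin c)
  show ?case by (rule exI[of _ "\<lambda>x h. h \<bullet> c"]) (auto intro: pf.pf_const has_derivative_inner_left[OF has_derivative_ident])
next
  case (pf_add f g)
  then obtain D1 D2 where d: "\<forall>x. (f has_derivative D1 x) (at x)" "\<forall>b. pf (\<lambda>x. D1 x b)"
    "\<forall>x. (g has_derivative D2 x) (at x)" "\<forall>b. pf (\<lambda>x. D2 x b)" by blast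
  show ?case by (rule exI[of _ "\<lambda>x h. D1 x h + D2 x h"]) (use d in \<open>auto intro: pf.pf_add has_derivative_add\<close>)
next
  case (pf_mul f g)
  then obtain D1 D2 where d: "\<forall>x. (f has_derivative D1 x) (at x)" "\<forall>b. pf (\<lambda>x. D1 x b)"
    "\<forall>x. (g has_derivative D2 x) (at x)" "\<forall>b. pf (\<lambda>x. D2 x b)" by blast
  have "pf (\<lambda>x. f x * D2 x b + D1 x b * g x)" for b
    using d pf_mul.hyps by (intro pf.pf_add pf.pf_mul) auto
  then show ?case by (intro exI[of _ "\<lambda>x h. f x * D2 x h + D1 x h * g x"])
     (use d in \<open>auto intro: has_derivative_mult\<close>)
qed

lemma pf_smooth: "pf f \<Longrightarrow> smooth_real f"
proof (coinduction arbitrary: f rule: smooth_real.coinduct)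
  case (smooth_real f)
  then obtain D where d: "\<forall>x. (f has_derivative D x) (at x)" "\<forall>b. pf (\<lambda>x. D x b)" using pf_deriv by blast
  have fd: "frechet_derivative f (at x) = D x" for x using d(1) frechet_derivative_at by metis
  show ?case using d by (auto simp: fd differentiable_def)
qed

lemma pf_scale: "pf f \<Longrightarrow> pf (\<lambda>x. c * f x)" using pf_mul[OF pf_const] .
lemma pf_neg: "pf f \<Longrightarrow> pf (\<lambda>x. - f x)" using pf_scale[of f "-1"] by simp
lemma pf_diff: "pf f \<Longrightarrow> pf g \<Longrightarrow> pf (\<lambda>x. f x - g x)" using pf_add[OF _ pf_neg] by simp
lemma pf_sum: "finite S \<Longrightarrow> (\<And>i. i \<in> S \<Longrightarrow> pf (f i)) \<Longrightarrow> pf (\<lambda>x. \<Sum>i\<in>S. f i x)"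
  by (induction S rule: finite_induct) (auto intro: pf_const pf_add)

definition pmap :: "('a::euclidean_space \<Rightarrow> 'b::real_inner) \<Rightarrow> bool" where
  "pmap F \<longleftrightarrow> (\<forall>c. pf (\<lambda>x. F x \<bullet> c))"

lemma pmap_smooth: "pmap F \<Longrightarrow> smooth_map F"
  by (simp add: pmap_def smooth_map_def pf_smooth)
lemma pmap_id: "pmap (\<lambda>x. x)" by (simp add: pmap_def pf_lin)
lemma pmap_const: "pmap (\<lambda>x. c)" by (simp add: pmap_def pf_const)
lemma pmap_fst: assumes "pmap F" shows "pmap (\<lambda>x. fst (F x))"
  unfolding pmap_def
proof
  fix c
  have e: "fst y \<bullet> c = y \<bullet> (c, 0)" for y :: "'b \<times> 'c" by (cases y) (simp add: inner_Pair)
  have "pf (\<lambda>x. F x \<bullet> (c, 0))" using assms unfolding pmap_def by blast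
  then show "pf (\<lambda>x. fst (F x) \<bullet> c)" by (simp only: e)
qed
lemma pmap_snd: assumes "pmap F" shows "pmap (\<lambda>x. snd (F x))"
  unfolding pmap_def
proof
  fix c
  have e: "snd y \<bullet> c = y \<bullet> (0, c)" for y :: "'b \<times> 'c" by (cases y) (simp add: inner_Pair)
  have "pf (\<lambda>x. F x \<bullet> (0, c))" using assms unfolding pmap_def by blast
  then show "pf (\<lambda>x. snd (F x) \<bullet> c)" by (simp only: e)
qed
lemma pmap_Pair: "pmap F \<Longrightarrow> pmap G \<Longrightarrow> pmap (\<lambda>x. (F x, G x))"
proof -
  have "(a, b) \<bullet> c = a \<bullet> fst c + b \<bullet> snd c" for a b c by (cases c) (simp add: inner_Pair)
  then show "pmap F \<Longrightarrow> pmap G \<Longrightarrow> pmap (\<lambda>x. (F x, G x))" by (simp add: pmap_def pf_add)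
qed
lemma pmap_add: "pmap F \<Longrightarrow> pmap G \<Longrightarrow> pmap (\<lambda>x. F x + G x)"
  by (simp add: pmap_def inner_add_left pf_add)
lemma pmap_diff: "pmap F \<Longrightarrow> pmap G \<Longrightarrow> pmap (\<lambda>x. F x - G x)"
  by (simp add: pmap_def inner_diff_left pf_diff)
lemma pmap_scale: "pf f \<Longrightarrow> pmap G \<Longrightarrow> pmap (\<lambda>x. f x *\<^sub>R G x)"
  by (simp add: pmap_def pf_mul)
lemma pmap_comp: "pmap (F :: _ \<Rightarrow> real^'n) \<Longrightarrow> pf (\<lambda>x. F x $ i)"
  by (simp add: pmap_def cart_eq_inner_axis)
lemma pmap_vec4: "pf a \<Longrightarrow> pf b \<Longrightarrow> pf c \<Longrightarrow> pf d \<Longrightarrow> pmap (\<lambda>x. vector [a x, b x, c x, d x] :: real^4)"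
  unfolding pmap_def inner_vec_def sum_4 vector_4 inner_real_def
  by (intro allI pf_add pf_mul pf_const; assumption)

lemma pmap_qm: "pmap F \<Longrightarrow> pmap G \<Longrightarrow> pmap (\<lambda>x. qm (F x) (G x))"
  unfolding qm_def
  by (intro pmap_vec4 pf_add pf_diff pf_mul pmap_comp; assumption)
lemma pmap_ff: "pmap F \<Longrightarrow> pmap (\<lambda>x. ff lam (F x))"
  unfolding ff_def
  by (intro pmap_scale pmap_diff pf_const pmap_const pmap_comp; assumption)
lemma pmap_conj: "pmap F \<Longrightarrow> pmap (\<lambda>x. conj4 (F x))"
  unfolding conj4_def
  by (intro pmap_vec4 pf_neg pmap_comp; assumption)

lemma smooth_tmul: "smooth_map (\<lambda>(g1, g2). tmul lam g1 g2)"
proof -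
  have e: "(\<lambda>(g1, g2). tmul lam g1 g2) = (\<lambda>x. (qm (fst (fst x)) (fst (snd x)),
     pm lam (fst (fst x)) (snd (fst x)) (fst (snd x)) (snd (snd x))))"
    by (auto simp: tmul_eq split: prod.splits)
  show ?thesis unfolding e pm_def
    by (intro pmap_smooth pmap_Pair pmap_qm pmap_add pmap_diff pmap_scale pf_const pmap_fst pmap_snd pmap_id
       pmap_const pmap_comp)
qed
lemma smooth_tinv: "smooth_map tinv"
proof -
  have e: "tinv = (\<lambda>x. (conj4 (fst x), conj4 (snd x)))" by (auto simp: tinv_def split: prod.splits)
  show ?thesis unfolding e
    by (intro pmap_smooth pmap_Pair pmap_conj pmap_fst pmap_snd pmap_id)
qed

theorem lemma3:
  fixes lam :: real
  assumes "lam > 0"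
  shows "group (TS3_group lam)
    \<and> \<one>\<^bsub>TS3_group lam\<^esub> = (one4, 0)
    \<and> (\<forall>g \<in> TS3. inv\<^bsub>TS3_group lam\<^esub> g = tinv g)
    \<and> smooth_map (\<lambda>(g1, g2). tmul lam g1 g2)
    \<and> smooth_map tinv"
  using grp inv_eq smooth_tmul smooth_tinv by (simp add: TS3_group_def)

end
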